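(* Let $(B,k)$ be an instance of the orthogonal buttons and scissors problem, with $B$ an $n\times m$ matrix, such that every row of $B$ contains at least one button, and such that there is no row block $X=[a,b]$ of $B$ and index $i_0\in X$ with the property that for every column $j$, either $B[X,\{j\}]$ contains no buttons, or both $B[[a,i_0-1],\{j\}]$ and $B[[i_0+1,b],\{j\}]$ contain at least $k$ buttons. If $n>(4k^2+1)(k+1)k(4k+6)^k$, then $(B,k)$ is a no-instance.
   Context: An instance of the orthogonal buttons and scissors problem is a pair $(B,k)$ where $B$ is an $n\times m$ matrix with nonnegative integer entries and $k$ is a nonnegative integer. Cell $(i,j)$ contains a button of color $c$ if $B[i,j]=c>0$, and no button if $B[i,j]=0$. A cut is either a horizontal cut (a sequence of consecutive cells in one row) or a vertical cut (a sequence of consecutive cells in one column). Cuts are applied one after another; a cut is valid at the moment it is applied if, among the buttons still present, its first and last cells contain buttons and all buttons in its cells have the same color. Applying a cut deletes all buttons in its cells. $(B,k)$ is a yes-instance if some sequence of at most $k$ cuts, each valid when applied, removes all buttons of $B$, and a no-instance otherwise. For a set of rows $X$ and set of columns $Y$, $B[X,Y]$ denotes the submatrix with entries $B[x,y]$, $x\in X$, $y\in Y$; $[a,b]$ denotes $\{a,\ldots,b\}$. A row block is a set $X$ of consecutive row indices such that for every column $j$, all buttons in $B[X,\{j\}]$ have the same color. *)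

theory Defs
  imports Main
begin

text \<open>A matrix B with n rows and m columns is a function nat => nat => nat,
  read on rows 1..n and columns 1..m (1-based, as in the paper).
  B i j = 0 means no button, B i j = c > 0 means a button of colour c.
  A state of the game is the set of cells that still carry a button.\<close>

type_synonym matrix = "nat \<Rightarrow> nat \<Rightarrow> nat"
type_synonym cell = "nat \<times> nat"

datatype cut =
    HCut nat nat nat
  | VCut nat nat nat

fun cut_cells :: "cut \<Rightarrow> cell set" where
  "cut_cells (HCut i j1 j2) = {(i, j) | j. j1 \<le> j \<and> j \<le> j2}"
| "cut_cells (VCut j i1 i2) = {(i, j) | i. i1 \<le> i \<and> i \<le> i2}"

fun cut_first :: "cut \<Rightarrow> cell" where
  "cut_first (HCut i j1 j2) = (i, j1)"
| "cut_first (VCut j i1 i2) = (i1, j)"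

fun cut_last :: "cut \<Rightarrow> cell" where
  "cut_last (HCut i j1 j2) = (i, j2)"
| "cut_last (VCut j i1 i2) = (i2, j)"

fun cut_wf :: "cut \<Rightarrow> bool" where
  "cut_wf (HCut i j1 j2) = (j1 \<le> j2)"
| "cut_wf (VCut j i1 i2) = (i1 \<le> i2)"

definition buttons :: "matrix \<Rightarrow> nat \<Rightarrow> nat \<Rightarrow> cell set" where
  "buttons B n m = {(i, j). i \<in> {1..n} \<and> j \<in> {1..m} \<and> B i j > 0}"

definition valid_cut :: "matrix \<Rightarrow> cell set \<Rightarrow> cut \<Rightarrow> bool" where
  "valid_cut B S c \<longleftrightarrow> cut_wf c \<and> cut_first c \<in> S \<and> cut_last c \<in> S \<and>
     (\<forall>p \<in> cut_cells c \<inter> S. \<forall>q \<in> cut_cells c \<inter> S. case_prod B p = case_prod B q)"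

fun clears :: "matrix \<Rightarrow> cell set \<Rightarrow> cut list \<Rightarrow> bool" where
  "clears B S [] = (S = {})"
| "clears B S (c # cs) = (valid_cut B S c \<and> clears B (S - cut_cells c) cs)"

definition yes_instance :: "matrix \<Rightarrow> nat \<Rightarrow> nat \<Rightarrow> nat \<Rightarrow> bool" where
  "yes_instance B n m k \<longleftrightarrow> (\<exists>cs. length cs \<le> k \<and> clears B (buttons B n m) cs)"

definition row_block :: "matrix \<Rightarrow> nat \<Rightarrow> nat \<Rightarrow> nat \<Rightarrow> nat \<Rightarrow> bool" where
  "row_block B n m a b \<longleftrightarrow> 1 \<le> a \<and> a \<le> b \<and> b \<le> n \<and>
     (\<forall>j \<in> {1..m}. \<forall>i \<in> {a..b}. \<forall>i' \<in> {a..b}.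
        B i j > 0 \<longrightarrow> B i' j > 0 \<longrightarrow> B i j = B i' j)"

definition col_count :: "matrix \<Rightarrow> nat set \<Rightarrow> nat \<Rightarrow> nat" where
  "col_count B R j = card {i \<in> R. B i j > 0}"

end

theory Submission
  imports Defs
begin

lemma gap:
  fixes F :: "nat set"
  assumes "finite F" "card F \<le> q" "L \<ge> (q+1)*M + q"
  shows "\<exists>a'. a \<le> a' \<and> a'+M \<le> a+L \<and> (\<forall>i\<in>{a'..<a'+M}. i \<notin> F)"
  using assms
proof (induction q arbitrary: F a L)
  case 0
  then show ?case by (intro exI[of _ a]) auto
next
  case (Suc q)
  show ?case
  proof (cases "\<forall>i\<in>{a..<a+M}. i \<notin> F")
    case True
    then show ?thesis using Suc.prems by (intro exI[of _ a]) auto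
  next
    case False
    then obtain x where x: "x \<in> F" "a \<le> x" "x < a+M" by auto
    have c: "card (F - {x}) \<le> q" using Suc.prems x by auto
    have "(Suc q + 1) * M = (q+1)*M + M" by simp
    hence L: "a+L-x-1 \<ge> (q+1)*M + q" using Suc.prems(3) x by linarith
    obtain a' where a': "x+1 \<le> a'" "a'+M \<le> x+1+(a+L-x-1)" "\<forall>i\<in>{a'..<a'+M}. i \<notin> F - {x}"
      using Suc.IH[OF _ c L, of "x+1"] Suc.prems by auto
    show ?thesis using a' x L by (intro exI[of _ a']) auto
  qed
qed

fun gg :: "nat \<Rightarrow> nat \<Rightarrow> nat" where
  "gg k 0 = 1"
| "gg k (Suc c) = 2*k*gg k c + 2*k - 1"

lemma gg_closed: "k \<ge> 1 \<Longrightarrow> gg k c + 1 = 2*(2*k)^c"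
proof (induction c)
  case 0 then show ?case by simp
next
  case (Suc c)
  have "gg k (Suc c) + 1 = 2*k*(gg k c + 1)" using Suc.prems by (simp add: algebra_simps)
  also have "\<dots> = 2*k*(2*(2*k)^c)" using Suc by simp
  also have "\<dots> = 2*(2*k)^Suc c" by simp
  finally show ?case .
qed

lemma rec:
  assumes "finite J" "card J \<le> c" "\<forall>j\<in>{1..m}. j \<notin> J \<longrightarrow> (\<forall>i\<in>{a..<a+L}. B i j = 0)"
    "L \<ge> gg k c" "1 \<le> k"
  shows "\<exists>a' b' i0. a \<le> a' \<and> a' \<le> i0 \<and> i0 \<le> b' \<and> b' < a+L \<and>
     (\<forall>j\<in>{1..m}. col_count B {a'..b'} j = 0 \<or>
        (col_count B {a'..<i0} j \<ge> k \<and> col_count B {i0<..b'} j \<ge> k))"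
  using assms
proof (induction c arbitrary: J a L)
  case 0
  then have J: "J = {}" by auto
  have "col_count B {a..a} j = 0" if "j \<in> {1..m}" for j
    using 0 J that unfolding col_count_def by auto
  then show ?case using 0 by (intro exI[of _ a] exI[of _ a] exI[of _ a]) auto
next
  case (Suc c)
  define M where "M = gg k c"
  define h where "h = k*M + k - 1"
  have L: "L \<ge> 2*h+1" using Suc.prems(4,5) unfolding h_def M_def by simp
  define i0 where "i0 = a + h"
  define b where "b = a + L - 1"
  show ?case
  proof (cases "\<forall>j\<in>{1..m}. col_count B {a..b} j = 0 \<or>
        (col_count B {a..<i0} j \<ge> k \<and> col_count B {i0<..b} j \<ge> k)")
    case True
    then show ?thesis using L unfolding i0_def b_def
      by (intro exI[of _ a] exI[of _ "a+L-1"] exI[of _ "a+h"]) auto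
  next
    case False
    then obtain j where j: "j \<in> {1..m}" "col_count B {a..b} j \<noteq> 0"
      "col_count B {a..<i0} j < k \<or> col_count B {i0<..b} j < k" by auto
    have jJ: "j \<in> J"
    proof (rule ccontr)
      assume "j \<notin> J"
      then have "\<forall>i\<in>{a..<a+L}. B i j = 0" using Suc.prems(3) j by auto
      then have "{i \<in> {a..b}. B i j > 0} = {}" unfolding b_def using L by auto
      then have "col_count B {a..b} j = 0" unfolding col_count_def by simp
      then show False using j by simp
    qed
    have cJ: "card (J - {j}) \<le> c" using Suc.prems(1,2) jJ by auto
    have fJ: "finite (J - {j})" using Suc.prems(1) by auto
    have hM: "h \<ge> (k - 1 + 1)*M + (k - 1)" unfolding h_def using Suc.prems(5) by simp
    have sub: "\<exists>a'. (a \<le> a' \<and> a'+M \<le> a+L) \<and> (\<forall>i\<in>{a'..<a'+M}. B i j = 0)"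
    proof (cases "col_count B {a..<i0} j < k")
      case True
      define F where "F = {i \<in> {a..<i0}. B i j > 0}"
      have "finite F" unfolding F_def by auto
      moreover have "card F \<le> k - 1" using True unfolding F_def col_count_def by simp
      ultimately obtain a' where a': "a \<le> a'" "a'+M \<le> a+h" "\<forall>i\<in>{a'..<a'+M}. i \<notin> F"
        using gap[OF _ _ hM, of F a] by auto
      show ?thesis using a' L unfolding F_def i0_def by (intro exI[of _ a']) auto
    next
      case False
      hence F: "col_count B {i0<..b} j < k" using j by auto
      define F where "F = {i \<in> {i0<..b}. B i j > 0}"
      have "finite F" unfolding F_def by auto
      moreover have "card F \<le> k - 1" using F unfolding F_def col_count_def by simp
      ultimately obtain a' where a': "i0+1 \<le> a'" "a'+M \<le> i0+1+h" "\<forall>i\<in>{a'..<a'+M}. i \<notin> F"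
        using gap[OF _ _ hM, of F "i0+1"] by auto
      show ?thesis using a' L unfolding F_def i0_def b_def by (intro exI[of _ a']) auto
    qed
    then obtain a' where a': "a \<le> a'" "a'+M \<le> a+L" "\<forall>i\<in>{a'..<a'+M}. B i j = 0" by blast
    have pre: "\<forall>j'\<in>{1..m}. j' \<notin> J - {j} \<longrightarrow> (\<forall>i\<in>{a'..<a'+M}. B i j' = 0)"
      using a' Suc.prems(3) by auto
    from Suc.IH[OF fJ cJ pre _ Suc.prems(5)] M_def
    obtain a'' b'' i0' where r: "a' \<le> a''" "a'' \<le> i0'" "i0' \<le> b''" "b'' < a'+M"
      "\<forall>j\<in>{1..m}. col_count B {a''..b''} j = 0 \<or>
        (col_count B {a''..<i0'} j \<ge> k \<and> col_count B {i0'<..b''} j \<ge> k)" by auto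
    show ?thesis using r a' by (intro exI[of _ a''] exI[of _ b''] exI[of _ i0']) auto
  qed
qed

fun vcols :: "cut list \<Rightarrow> nat set" where
  "vcols [] = {}"
| "vcols (HCut i j1 j2 # cs) = vcols cs"
| "vcols (VCut j i1 i2 # cs) = insert j (vcols cs)"

fun badrows :: "cut list \<Rightarrow> nat set" where
  "badrows [] = {}"
| "badrows (HCut i j1 j2 # cs) = insert i (badrows cs)"
| "badrows (VCut j i1 i2 # cs) = insert i1 (insert i2 (badrows cs))"

lemma vcols_card: "finite (vcols cs) \<and> card (vcols cs) \<le> length cs"
proof (induction cs rule: vcols.induct)
  case (3 j i1 i2 cs) then show ?case by (simp add: card_insert_if)
qed auto

lemma badrows_card: "finite (badrows cs) \<and> card (badrows cs) \<le> 2 * length cs"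
proof (induction cs rule: badrows.induct)
  case (2 i j1 j2 cs) then show ?case by (simp add: card_insert_if)
next
  case (3 j i1 i2 cs) then show ?case by (simp add: card_insert_if)
qed auto

lemma hcut_bad: "HCut i j1 j2 \<in> set cs \<Longrightarrow> i \<in> badrows cs"
  by (induction cs rule: badrows.induct) auto

lemma vcut_bad: "VCut j i1 i2 \<in> set cs \<Longrightarrow> i1 \<in> badrows cs \<and> i2 \<in> badrows cs \<and> j \<in> vcols cs"
  by (induction cs rule: badrows.induct) auto

lemma cover: "clears B S cs \<Longrightarrow> p \<in> S \<Longrightarrow> \<exists>c\<in>set cs. p \<in> cut_cells c"
  by (induction cs arbitrary: S) auto

lemma mono_col:
  assumes "clears B S cs" "\<forall>c\<in>set cs. cut_cells c \<inter> T = {} \<or> T \<subseteq> cut_cells c"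
    "p \<in> S \<inter> T" "q \<in> S \<inter> T"
  shows "case_prod B p = case_prod B q"
  using assms
proof (induction cs arbitrary: S)
  case Nil then show ?case by auto
next
  case (Cons c cs)
  show ?case
  proof (cases "cut_cells c \<inter> T = {}")
    case True
    then show ?thesis using Cons.prems by (intro Cons.IH[of "S - cut_cells c"]) auto
  next
    case False
    then have "T \<subseteq> cut_cells c" using Cons.prems by auto
    then have "p \<in> cut_cells c \<inter> S" "q \<in> cut_cells c \<inter> S" using Cons.prems by auto
    moreover have "valid_cut B S c" using Cons.prems(1) by simp
    ultimately show ?thesis unfolding valid_cut_def by blast
  qed
qed

lemma bound:
  fixes n k :: nat
  assumes "k \<ge> 1" "n > (4 * k^2 + 1) * (k + 1) * k * (4 * k + 6) ^ k"
  shows "n \<ge> (2*k+1) * gg k k + 2*k"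
proof -
  define P where "P = (4*k+6)^k"
  have P1: "P \<ge> 1" unfolding P_def by simp
  have "gg k k + 1 = 2*(2*k)^k" using gg_closed assms(1) by blast
  moreover have "(2*k)^k \<le> P" unfolding P_def by (intro power_mono) auto
  ultimately have g: "gg k k \<le> 2*P" by linarith
  have "(2*k+1) * gg k k + 2*k \<le> (2*k+1)*(2*P) + 2*k*P"
  proof -
    have "2*k \<le> 2*k*P" using P1 by simp
    moreover have "(2*k+1) * gg k k \<le> (2*k+1)*(2*P)" using g by (rule mult_le_mono2)
    ultimately show ?thesis by linarith
  qed
  also have "\<dots> = (6*k+2)*P" by (simp add: algebra_simps)
  also have "\<dots> \<le> (10*k)*P" using assms(1) by (intro mult_le_mono) auto
  also have "10*k \<le> (4 * k^2 + 1) * (k + 1) * k"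
  proof -
    have "10 \<le> (4 * k^2 + 1) * (k + 1)"
    proof -
      have "5 \<le> 4 * k^2 + 1" using assms(1) by (simp add: power2_eq_square)
      moreover have "2 \<le> k + 1" using assms(1) by simp
      ultimately show ?thesis using mult_le_mono[of 5 _ 2] by fastforce
    qed
    then show ?thesis using mult_le_mono1[of 10 _ k] by simp
  qed
  then have "(10*k)*P \<le> (4 * k^2 + 1) * (k + 1) * k * P" by simp
  finally show ?thesis using assms(2) unfolding P_def by linarith
qed

theorem mainTheorem4:
  fixes B :: matrix and n m k :: nat
  assumes rows: "\<forall>i \<in> {1..n}. \<exists>j \<in> {1..m}. B i j > 0"
    and no_block: "\<not> (\<exists>a b i0. row_block B n m a b \<and> a \<le> i0 \<and> i0 \<le> b \<and>
         (\<forall>j \<in> {1..m}. col_count B {a..b} j = 0 \<or>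
            (col_count B {a..<i0} j \<ge> k \<and> col_count B {i0<..b} j \<ge> k)))"
    and large: "n > (4 * k^2 + 1) * (k + 1) * k * (4 * k + 6) ^ k"
  shows "\<not> yes_instance B n m k"
proof
  assume "yes_instance B n m k"
  then obtain cs where cs: "length cs \<le> k" "clears B (buttons B n m) cs"
    unfolding yes_instance_def by auto
  show False
  proof (cases "k = 0")
    case True
    then have "cs = []" using cs by simp
    then have e: "buttons B n m = {}" using cs by simp
    have "n \<ge> 1" using large by simp
    then have "1 \<in> {1..n}" by simp
    then obtain j where "j \<in> {1..m}" "B 1 j > 0" using rows by blast
    then have "(1, j) \<in> buttons B n m" using \<open>n \<ge> 1\<close> unfolding buttons_def by auto
    then show False using e by simp
  next
    case False
    then have k1: "k \<ge> 1" by simp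
    define M where "M = gg k k"
    have nb: "n \<ge> (2*k+1)*M + 2*k" using bound[OF k1 large] M_def by simp
    have bc: "finite (badrows cs)" "card (badrows cs) \<le> 2*k"
      using badrows_card[of cs] cs(1) by auto
    obtain a0 where a0: "1 \<le> a0" "a0 + M \<le> 1 + n" "\<forall>i\<in>{a0..<a0+M}. i \<notin> badrows cs"
      using gap[OF bc, where L=n and M=M and a=1] nb by auto
    have vc: "finite (vcols cs)" "card (vcols cs) \<le> k"
      using vcols_card[of cs] cs(1) by auto
    have pre: "\<forall>j\<in>{1..m}. j \<notin> vcols cs \<longrightarrow> (\<forall>i\<in>{a0..<a0+M}. B i j = 0)"
    proof (intro ballI impI)
      fix j i assume j: "j \<in> {1..m}" "j \<notin> vcols cs" and i: "i \<in> {a0..<a0+M}"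
      show "B i j = 0"
      proof (rule ccontr)
        assume "B i j \<noteq> 0"
        then have "(i, j) \<in> buttons B n m" using j i a0 unfolding buttons_def by auto
        then obtain c where c: "c \<in> set cs" "(i, j) \<in> cut_cells c" using cover[OF cs(2)] by blast
        show False
        proof (cases c)
          case (HCut i' j1 j2)
          then show False using c hcut_bad[of i' j1 j2 cs] a0(3) i by auto
        next
          case (VCut j' i1 i2)
          then show False using c vcut_bad[of j' i1 i2 cs] j by auto
        qed
      qed
    qed
    obtain a' b' i0 where r: "a0 \<le> a'" "a' \<le> i0" "i0 \<le> b'" "b' < a0+M"
      "\<forall>j\<in>{1..m}. col_count B {a'..b'} j = 0 \<or>
        (col_count B {a'..<i0} j \<ge> k \<and> col_count B {i0<..b'} j \<ge> k)"
      using rec[OF vc pre _ k1] M_def by blast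
    have "row_block B n m a' b'"
      unfolding row_block_def
    proof (intro conjI ballI impI)
      show "1 \<le> a'" "a' \<le> b'" "b' \<le> n" using r a0 by auto
    next
      fix j i i' assume j: "j \<in> {1..m}" and ii: "i \<in> {a'..b'}" "i' \<in> {a'..b'}"
        and bp: "0 < B i j" "0 < B i' j"
      define T where "T = {a'..b'} \<times> {j}"
      have nobad: "x \<notin> badrows cs" if "x \<in> {a'..b'}" for x
        using that r a0(3) by auto
      have dc: "\<forall>c\<in>set cs. cut_cells c \<inter> T = {} \<or> T \<subseteq> cut_cells c"
      proof
        fix c assume c: "c \<in> set cs"
        show "cut_cells c \<inter> T = {} \<or> T \<subseteq> cut_cells c"
        proof (cases c)
          case (HCut i1 j1 j2)
          then have "i1 \<notin> {a'..b'}" using nobad hcut_bad c by blast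
          then show ?thesis using HCut unfolding T_def by auto
        next
          case (VCut j' i1 i2)
          then have "i1 \<notin> {a'..b'}" "i2 \<notin> {a'..b'}" using nobad vcut_bad c by blast+
          show ?thesis
          proof (cases "j' = j \<and> i1 < a' \<and> b' < i2")
            case True
            then show ?thesis using VCut unfolding T_def by auto
          next
            case F: False
            have "cut_cells c \<inter> T = {}"
            proof (rule ccontr)
              assume "cut_cells c \<inter> T \<noteq> {}"
              then obtain x where x: "x \<in> {a'..b'}" "(x, j) \<in> cut_cells c"
                unfolding T_def by blast
              then have "j' = j" "i1 \<le> x" "x \<le> i2" using VCut by auto
              with x show False using F \<open>i1 \<notin> {a'..b'}\<close> \<open>i2 \<notin> {a'..b'}\<close> by auto
            qed
            then show ?thesis by simp
          qed
        qed
      qed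
      have "(i, j) \<in> buttons B n m \<inter> T" "(i', j) \<in> buttons B n m \<inter> T"
        using ii bp j r a0 unfolding buttons_def T_def by auto
      from mono_col[OF cs(2) dc this] show "B i j = B i' j" by simp
    qed
    then show False using no_block r by blast
  qed
qed

end
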